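(* Suppose $1/d\le\lambda\le d$, and let $L=\{0\}\subset\mathbb R^d$ and $C=\mathcal M_{\mathsf{diff}}\cap\mathbb R^d_{\ge0}$. There is an absolute constant $c>0$ such that when each entry of the parameter $\theta$ is independently observed $\mathrm{Poi}(\lambda)$ times and each observation is corrupted by independent standard Gaussian noise, \[ \inf_\psi\mathcal E(\psi;L,C,\epsilon)\ge\frac12\quad\text{whenever}\quad\epsilon^2\le c\frac{d^{1/4}}{\lambda^{3/4}}. \]
   Context: $\mathcal M^d=\{\theta\in\mathbb R^d:\theta_1\le\theta_2\le\cdots\le\theta_d\}$ and $\mathcal M_{\mathsf{diff}}=\{u-v:u,v\in\mathcal M^d\}$; $\mathbb R^d_{\ge0}$ is the positive orthant. Observation model: given $\theta\in\mathbb R^d$, draw counts $\kappa_1,\dots,\kappa_d$ i.i.d. $\mathrm{Poi}(\lambda)$ and, for each $i$, $\kappa_i$ independent observations $\theta_i+g$ with $g\sim\mathcal N(0,1)$ independent; $y$ is the full observation and $\mathbb E_\theta$ expectation under $\theta$. For $C_1\subset C_2$ and $\epsilon>0$, $\mathbb B_2(C_1;\epsilon)=\{\theta:\inf_{x\in C_1}\|\theta-x\|_2\le\epsilon\}$, and for a measurable test $\psi$ with values in $\{0,1\}$, $\mathcal E(\psi;C_1,C_2,\epsilon)=\sup_{\theta\in C_1}\mathbb E_\theta[\psi(y)]+\sup_{\theta\in C_2\setminus\mathbb B_2(C_1;\epsilon)}\mathbb E_\theta[1-\psi(y)]$. The infimum is over all such tests. *)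

theory Defs
  imports "HOL-Probability.Probability"
begin

text \<open>Vectors in R^d are represented as functions nat => real, coordinates 0..d-1,
  equal to 0 outside {..<d}.\<close>

definition vecs :: "nat \<Rightarrow> (nat \<Rightarrow> real) set" where
  "vecs d = {\<theta>. \<forall>i\<ge>d. \<theta> i = 0}"

definition l2norm :: "nat \<Rightarrow> (nat \<Rightarrow> real) \<Rightarrow> real" where
  "l2norm d \<theta> = sqrt (\<Sum>i<d. (\<theta> i)^2)"

definition monotone_cone :: "nat \<Rightarrow> (nat \<Rightarrow> real) set" where
  "monotone_cone d = {\<theta> \<in> vecs d. \<forall>i j. i \<le> j \<longrightarrow> j < d \<longrightarrow> \<theta> i \<le> \<theta> j}"

definition monotone_diff :: "nat \<Rightarrow> (nat \<Rightarrow> real) set" where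
  "monotone_diff d = {\<lambda>i. u i - v i | u v. u \<in> monotone_cone d \<and> v \<in> monotone_cone d}"

definition pos_orthant :: "nat \<Rightarrow> (nat \<Rightarrow> real) set" where
  "pos_orthant d = {\<theta> \<in> vecs d. \<forall>i<d. 0 \<le> \<theta> i}"

definition enlarge :: "nat \<Rightarrow> (nat \<Rightarrow> real) set \<Rightarrow> real \<Rightarrow> (nat \<Rightarrow> real) set" where
  "enlarge d C1 \<epsilon> = {\<theta> \<in> vecs d. (INF x\<in>C1. l2norm d (\<lambda>i. \<theta> i - x i)) \<le> \<epsilon>}"

definition std_normal :: "real measure" where
  "std_normal = density lborel std_normal_density"

text \<open>Observation of a single coordinate with value t: a count k ~ Poi(lam) and
  the k noisy observations t + g_j (j < k); unobserved slots j >= k are set to 0.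
  The iid noise g_0, g_1, ... is drawn from the infinite product of standard Gaussians.\<close>
definition obs_space :: "(nat \<times> (nat \<Rightarrow> real)) measure" where
  "obs_space = count_space UNIV \<Otimes>\<^sub>M PiM UNIV (\<lambda>_. borel)"

definition obs_coord :: "real \<Rightarrow> real \<Rightarrow> (nat \<times> (nat \<Rightarrow> real)) measure" where
  "obs_coord lam t =
     distr (measure_pmf (poisson_pmf lam) \<Otimes>\<^sub>M PiM UNIV (\<lambda>_. std_normal)) obs_space
       (\<lambda>(k, g). (k, \<lambda>j. if j < k then t + g j else 0))"

definition obs_law :: "nat \<Rightarrow> real \<Rightarrow> (nat \<Rightarrow> real) \<Rightarrow> (nat \<Rightarrow> nat \<times> (nat \<Rightarrow> real)) measure" where
  "obs_law d lam \<theta> = PiM {..<d} (\<lambda>i. obs_coord lam (\<theta> i))"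

definition obs_full_space :: "nat \<Rightarrow> (nat \<Rightarrow> nat \<times> (nat \<Rightarrow> real)) measure" where
  "obs_full_space d = PiM {..<d} (\<lambda>_. obs_space)"

text \<open>A test is a measurable map psi from the observation space to {0,1} (bool; True = 1).
  Risk E(psi; C1, C2, eps).\<close>
definition test_risk ::
  "nat \<Rightarrow> real \<Rightarrow> ((nat \<Rightarrow> nat \<times> (nat \<Rightarrow> real)) \<Rightarrow> bool) \<Rightarrow> (nat \<Rightarrow> real) set \<Rightarrow> (nat \<Rightarrow> real) set \<Rightarrow> real \<Rightarrow> real" where
  "test_risk d lam \<psi> C1 C2 \<epsilon> =
     (SUP \<theta>\<in>C1. measure (obs_law d lam \<theta>) {y \<in> space (obs_law d lam \<theta>). \<psi> y})
   + (SUP \<theta>\<in>C2 - enlarge d C1 \<epsilon>. measure (obs_law d lam \<theta>) {y \<in> space (obs_law d lam \<theta>). \<not> \<psi> y})"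

end

theory Submission
  imports Defs
begin

lemma std_normal_prob: "prob_space std_normal"
  unfolding std_normal_def by (rule prob_space_normal_density) simp

lemma sets_std_normal[simp, measurable_cong]: "sets std_normal = sets borel"
  unfolding std_normal_def by simp

lemma space_std_normal[simp]: "space std_normal = UNIV"
  unfolding std_normal_def by simp

lemma normal_shift_eq: "std_normal_density (y - t) = std_normal_density y * exp (t * y - t^2/2)"
proof -
  have "- (y - t)\<^sup>2 / 2 = - y\<^sup>2 / 2 + (t * y - t^2/2)" by (simp add: power2_eq_square field_simps)
  then have "exp (- (y - t)\<^sup>2 / 2) = exp (- y\<^sup>2 / 2) * exp (t * y - t^2/2)" by (simp add: exp_add[symmetric])
  then show ?thesis by (simp add: std_normal_density_def)
qed

lemma gauss_shift:
  "distr std_normal borel (\<lambda>x. t + x) = density std_normal (\<lambda>x. ennreal (exp (t * x - t^2/2)))"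
proof (rule measure_eqI)
  fix A assume A: "A \<in> sets (distr std_normal borel (\<lambda>x. t + x))"
  then have [measurable]: "A \<in> sets borel" by simp
  have "emeasure (distr std_normal borel (\<lambda>x. t + x)) A = (\<integral>\<^sup>+x. indicator A (t + x) \<partial>std_normal)"
    by (subst nn_integral_indicator[symmetric], simp)
       (subst nn_integral_distr, auto)
  also have "\<dots> = (\<integral>\<^sup>+x. ennreal (std_normal_density x) * indicator A (t + x) \<partial>lborel)"
    unfolding std_normal_def by (subst nn_integral_density) auto
  also have "\<dots> = (\<integral>\<^sup>+y. ennreal (std_normal_density (y - t)) * indicator A y \<partial>lborel)"
    using nn_integral_real_affine[of "\<lambda>y. ennreal (std_normal_density (y - t)) * indicator A y" 1 t]
    by simp
  also have "\<dots> = (\<integral>\<^sup>+y. ennreal (std_normal_density y) * (ennreal (exp (t * y - t^2/2)) * indicator A y) \<partial>lborel)"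
    by (intro nn_integral_cong) (simp add: normal_shift_eq ennreal_mult' mult.assoc)
  also have "\<dots> = (\<integral>\<^sup>+y. ennreal (exp (t * y - t^2/2)) * indicator A y \<partial>std_normal)"
    unfolding std_normal_def by (subst nn_integral_density) auto
  also have "\<dots> = emeasure (density std_normal (\<lambda>x. ennreal (exp (t * x - t^2/2)))) A"
    by (subst emeasure_density) auto
  finally show "emeasure (distr std_normal borel (\<lambda>x. t + x)) A = emeasure (density std_normal (\<lambda>x. ennreal (exp (t * x - t^2/2)))) A" .
qed simp

lemma gauss_mgf: "(\<integral>\<^sup>+x. ennreal (exp (t * x - t^2/2)) \<partial>std_normal) = 1"
proof -
  interpret prob_space std_normal by (rule std_normal_prob)
  have "(\<integral>\<^sup>+x. ennreal (exp (t * x - t^2/2)) \<partial>std_normal) = emeasure (density std_normal (\<lambda>x. ennreal (exp (t * x - t^2/2)))) UNIV"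
    by (subst emeasure_density) auto
  also have "\<dots> = emeasure (distr std_normal borel (\<lambda>x. t + x)) UNIV" by (simp add: gauss_shift)
  also have "\<dots> = 1" by (subst emeasure_distr) (auto simp: emeasure_space_1[simplified])
  finally show ?thesis .
qed


lemma PiM_density:
  assumes fin: "finite I" and M: "\<And>i. prob_space (M i)"
    and f: "\<And>i. f i \<in> borel_measurable (M i)"
    and D: "\<And>i. prob_space (density (M i) (f i))"
  shows "PiM I (\<lambda>i. density (M i) (f i)) = density (PiM I M) (\<lambda>x. \<Prod>i\<in>I. f i (x i))"
proof -
  interpret Mp: product_prob_space M using M by (simp add: product_prob_space_def product_prob_space_axioms_def product_sigma_finite_def prob_space_imp_sigma_finite)
  interpret Dp: product_prob_space "\<lambda>i. density (M i) (f i)" using D by (simp add: product_prob_space_def product_prob_space_axioms_def product_sigma_finite_def prob_space_imp_sigma_finite)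
  have "density (PiM I M) (\<lambda>x. \<Prod>i\<in>I. f i (x i)) = PiM I (\<lambda>i. density (M i) (f i))"
  proof (rule Dp.PiM_eqI[OF fin])
    show "sets (density (PiM I M) (\<lambda>x. \<Prod>i\<in>I. f i (x i))) = sets (PiM I (\<lambda>i. density (M i) (f i)))"
      unfolding sets_density by (rule sets_PiM_cong) auto
  next
    fix A assume A: "\<And>i. i \<in> I \<Longrightarrow> A i \<in> sets (density (M i) (f i))"
    then have A': "\<And>i. i \<in> I \<Longrightarrow> A i \<in> sets (M i)" by simp
    have PA: "PiE I A \<in> sets (PiM I M)" using A' by (simp add: sets_PiM_I_finite fin)
    have fm: "(\<lambda>x. \<Prod>i\<in>I. f i (x i)) \<in> borel_measurable (PiM I M)"
    proof (intro borel_measurable_prod_ennreal)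
      fix i assume "i \<in> I"
      show "(\<lambda>x. f i (x i)) \<in> borel_measurable (PiM I M)"
        using measurable_comp[OF measurable_component_singleton[OF \<open>i \<in> I\<close>, of M] f[of i]] by (simp add: comp_def)
    qed
    have "emeasure (density (PiM I M) (\<lambda>x. \<Prod>i\<in>I. f i (x i))) (PiE I A)
        = (\<integral>\<^sup>+x. (\<Prod>i\<in>I. f i (x i)) * indicator (PiE I A) x \<partial>PiM I M)"
      using fm PA by (rule emeasure_density)
    also have "\<dots> = (\<integral>\<^sup>+x. (\<Prod>i\<in>I. f i (x i) * indicator (A i) (x i)) \<partial>PiM I M)"
    proof (intro nn_integral_cong)
      fix x assume "x \<in> space (PiM I M)"
      have "indicator (PiE I A) x = (\<Prod>i\<in>I. indicator (A i) (x i) :: ennreal)"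
        using \<open>x \<in> space (PiM I M)\<close> unfolding space_PiM
        using fin by (auto simp: indicator_def PiE_def Pi_def extensional_def)
      then show "(\<Prod>i\<in>I. f i (x i)) * indicator (PiE I A) x = (\<Prod>i\<in>I. f i (x i) * indicator (A i) (x i))"
        by (simp add: prod.distrib)
    qed
    also have "\<dots> = (\<Prod>i\<in>I. \<integral>\<^sup>+y. f i y * indicator (A i) y \<partial>M i)"
      using A' f by (intro Mp.product_nn_integral_prod fin) auto
    also have "\<dots> = (\<Prod>i\<in>I. emeasure (density (M i) (f i)) (A i))"
      using A' f by (intro prod.cong refl) (simp add: emeasure_density)
    finally show "emeasure (density (PiM I M) (\<lambda>x. \<Prod>i\<in>I. f i (x i))) (PiE I A) = (\<Prod>i\<in>I. emeasure (density (M i) (f i)) (A i))" .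
  qed
  then show ?thesis by simp
qed


lemma PiM_UNIV_restrict:
  assumes fin: "finite K" and M: "\<And>i. prob_space (M i)"
  shows "distr (PiM UNIV M) (PiM K M) (\<lambda>g. restrict g K) = PiM K M"
proof -
  interpret Mp: product_prob_space M UNIV using M by (simp add: product_prob_space_def product_prob_space_axioms_def product_sigma_finite_def prob_space_imp_sigma_finite)
  show ?thesis using fin by (intro Mp.distr_PiM_restrict_finite) auto
qed

lemma nn_integral_PiM_UNIV_restrict:
  assumes fin: "finite K" and M: "\<And>i. prob_space (M i)"
    and F: "F \<in> borel_measurable (PiM K M)"
  shows "(\<integral>\<^sup>+g. F (restrict g K) \<partial>PiM UNIV M) = (\<integral>\<^sup>+x. F x \<partial>PiM K M)"
proof -
  have "(\<integral>\<^sup>+x. F x \<partial>PiM K M) = (\<integral>\<^sup>+x. F x \<partial>distr (PiM UNIV M) (PiM K M) (\<lambda>g. restrict g K))"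
    by (simp add: PiM_UNIV_restrict[OF fin M])
  also have "\<dots> = (\<integral>\<^sup>+g. F (restrict g K) \<partial>PiM UNIV M)"
    using F by (intro nn_integral_distr) (auto intro!: measurable_restrict_subset)
  finally show ?thesis by simp
qed

definition gd :: "real \<Rightarrow> real \<Rightarrow> real" where
  "gd t x = exp (t * x - t^2/2)"

lemma gd_pos[simp]: "0 < gd t x" "0 \<le> gd t x" by (simp_all add: gd_def)

lemma gd_measurable[measurable]: "gd t \<in> borel_measurable borel"
  unfolding gd_def by measurable

lemma prob_space_gd: "prob_space (density std_normal (\<lambda>x. ennreal (gd t x)))"
proof -
  interpret prob_space std_normal by (rule std_normal_prob)
  have "prob_space (distr std_normal borel (\<lambda>x. t + x))" by (rule prob_space_distr) simp
  then show ?thesis by (simp add: gauss_shift gd_def)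
qed

lemma nn_integral_PiM_shift:
  assumes fin: "finite K" and F: "F \<in> borel_measurable (PiM K (\<lambda>_. std_normal))"
  shows "(\<integral>\<^sup>+x. F (\<lambda>j\<in>K. t + x j) \<partial>PiM K (\<lambda>_. std_normal))
       = (\<integral>\<^sup>+x. F x * (\<Prod>j\<in>K. ennreal (gd t (x j))) \<partial>PiM K (\<lambda>_. std_normal))"
proof -
  define Nt where "Nt = density std_normal (\<lambda>x. ennreal (gd t x))"
  have Nt_prob: "prob_space Nt" unfolding Nt_def by (rule prob_space_gd)
  have sNt[simp]: "sets Nt = sets borel" by (simp add: Nt_def)
  have dd: "distr std_normal Nt (\<lambda>x. t + x) = Nt"
  proof -
    have "distr std_normal Nt (\<lambda>x. t + x) = distr std_normal borel (\<lambda>x. t + x)"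
      by (rule distr_cong) auto
    then show ?thesis by (simp add: gauss_shift Nt_def gd_def)
  qed
  have "distr (PiM K (\<lambda>_. std_normal)) (PiM K (\<lambda>_. Nt)) (compose K (\<lambda>x. t + x))
      = PiM K (\<lambda>_. distr std_normal Nt (\<lambda>x. t + x))"
  proof (rule distr_PiM_finite_prob_space'[OF fin])
    show "(\<lambda>x. t + x) \<in> std_normal \<rightarrow>\<^sub>M Nt" for i
      by (subst measurable_cong_sets[of _ borel _ borel]) auto
  qed (auto simp: std_normal_prob Nt_prob)
  also have "\<dots> = PiM K (\<lambda>_. Nt)" by (simp add: dd)
  also have "\<dots> = density (PiM K (\<lambda>_. std_normal)) (\<lambda>x. \<Prod>j\<in>K. ennreal (gd t (x j)))"
    unfolding Nt_def by (rule PiM_density[OF fin std_normal_prob _ prob_space_gd]) simp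
  finally have eq: "distr (PiM K (\<lambda>_. std_normal)) (PiM K (\<lambda>_. Nt)) (compose K (\<lambda>x. t + x))
      = density (PiM K (\<lambda>_. std_normal)) (\<lambda>x. \<Prod>j\<in>K. ennreal (gd t (x j)))" .
  have sK: "sets (PiM K (\<lambda>_. Nt)) = sets (PiM K (\<lambda>_. std_normal))"
    by (rule sets_PiM_cong) auto
  have F': "F \<in> borel_measurable (PiM K (\<lambda>_. Nt))"
    using F by (simp add: measurable_cong_sets[OF sK refl])
  have cm: "compose K (\<lambda>x. t + x) \<in> PiM K (\<lambda>_. std_normal) \<rightarrow>\<^sub>M PiM K (\<lambda>_. Nt)"
    unfolding compose_def
  proof (rule measurable_restrict)
    fix i assume "i \<in> K"
    have "(\<lambda>x. t + x i) \<in> PiM K (\<lambda>_. std_normal) \<rightarrow>\<^sub>M borel"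
      using \<open>i \<in> K\<close> by measurable
    then show "(\<lambda>x. t + x i) \<in> PiM K (\<lambda>_. std_normal) \<rightarrow>\<^sub>M Nt"
      by (simp add: measurable_cong_sets[OF refl sNt])
  qed
  have "(\<integral>\<^sup>+x. F (\<lambda>j\<in>K. t + x j) \<partial>PiM K (\<lambda>_. std_normal))
      = (\<integral>\<^sup>+y. F y \<partial>distr (PiM K (\<lambda>_. std_normal)) (PiM K (\<lambda>_. Nt)) (compose K (\<lambda>x. t + x)))"
    using F' cm by (subst nn_integral_distr) (auto simp: compose_def)
  also have "\<dots> = (\<integral>\<^sup>+x. (\<Prod>j\<in>K. ennreal (gd t (x j))) * F x \<partial>PiM K (\<lambda>_. std_normal))"
    unfolding eq using F by (subst nn_integral_density) auto
  finally show ?thesis by (simp add: mult.commute)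
qed


lemma prob_PiM_N: "prob_space (PiM UNIV (\<lambda>_::nat. std_normal))"
proof -
  interpret Mp: product_prob_space "\<lambda>_::nat. std_normal" UNIV
    using std_normal_prob by (simp add: product_prob_space_def product_prob_space_axioms_def product_sigma_finite_def prob_space_imp_sigma_finite)
  show ?thesis by (rule Mp.P.prob_space_axioms)
qed

lemma shift_trunc_integral:
  assumes H[measurable]: "H \<in> borel_measurable (PiM UNIV (\<lambda>_::nat. borel::real measure))"
  shows "(\<integral>\<^sup>+g. H (\<lambda>j. if j < k then t + g j else 0) \<partial>PiM UNIV (\<lambda>_. std_normal))
       = (\<integral>\<^sup>+g. H (\<lambda>j. if j < k then g j else 0) * (\<Prod>j\<in>{..<k}. ennreal (gd t (g j))) \<partial>PiM UNIV (\<lambda>_. std_normal))"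
proof -
  let ?K = "{..<k}"
  define F where "F x = H (\<lambda>j. if j < k then x j else 0)" for x :: "nat \<Rightarrow> real"
  have rr: "\<And>x. (\<lambda>j. if j < k then restrict x {..<k} j else (0::real)) = (\<lambda>j. if j < k then x j else 0)"
    by (auto simp: restrict_def)
  have sK: "sets (PiM ?K (\<lambda>_. std_normal)) = sets (PiM ?K (\<lambda>_. borel))"
    by (rule sets_PiM_cong) auto
  have Fm: "F \<in> borel_measurable (PiM ?K (\<lambda>_. std_normal))"
  proof -
    have "(\<lambda>x::nat\<Rightarrow>real. \<lambda>j. if j < k then x j else 0) \<in> PiM ?K (\<lambda>_. borel) \<rightarrow>\<^sub>M PiM UNIV (\<lambda>_. borel)"
    proof (rule measurable_PiM_single')
      fix j :: nat
      show "(\<lambda>\<omega>::nat\<Rightarrow>real. if j < k then \<omega> j else 0) \<in> borel_measurable (PiM ?K (\<lambda>_. borel))"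
      proof (cases "j < k")
        case True then show ?thesis by (simp add: measurable_component_singleton)
      next
        case False then show ?thesis by simp
      qed
    qed auto
    then have "F \<in> borel_measurable (PiM ?K (\<lambda>_. borel))"
      unfolding F_def by (rule measurable_compose[OF _ H])
    then show ?thesis by (simp add: measurable_cong_sets[OF sK refl])
  qed
  have G1m: "(\<lambda>x. F (\<lambda>j\<in>?K. t + x j)) \<in> borel_measurable (PiM ?K (\<lambda>_. std_normal))"
  proof -
    have "(\<lambda>x::nat\<Rightarrow>real. \<lambda>j\<in>?K. t + x j) \<in> PiM ?K (\<lambda>_. std_normal) \<rightarrow>\<^sub>M PiM ?K (\<lambda>_. std_normal)"
    proof (rule measurable_restrict)
      fix i assume "i \<in> ?K"
      have "(\<lambda>x. t + x i) \<in> PiM ?K (\<lambda>_. std_normal) \<rightarrow>\<^sub>M borel"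
        using \<open>i \<in> ?K\<close> by measurable
      then show "(\<lambda>x. t + x i) \<in> PiM ?K (\<lambda>_. std_normal) \<rightarrow>\<^sub>M std_normal"
        by (simp add: measurable_cong_sets[OF refl sets_std_normal])
    qed
    then show ?thesis by (rule measurable_compose[OF _ Fm])
  qed
  have G2m: "(\<lambda>x. F x * (\<Prod>j\<in>?K. ennreal (gd t (x j)))) \<in> borel_measurable (PiM ?K (\<lambda>_. std_normal))"
  proof -
    have "(\<lambda>x. (\<Prod>j\<in>?K. ennreal (gd t (x j)))) \<in> borel_measurable (PiM ?K (\<lambda>_. borel))"
    proof (rule borel_measurable_prod_ennreal)
      fix j assume "j \<in> ?K"
      show "(\<lambda>x. ennreal (gd t (x j))) \<in> borel_measurable (PiM ?K (\<lambda>_. borel))"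
        by (rule measurable_compose[OF measurable_component_singleton[OF \<open>j \<in> ?K\<close>]]) simp
    qed
    then have "(\<lambda>x. (\<Prod>j\<in>?K. ennreal (gd t (x j)))) \<in> borel_measurable (PiM ?K (\<lambda>_. std_normal))"
      by (simp add: measurable_cong_sets[OF sK refl])
    then show ?thesis using Fm by (rule borel_measurable_times_ennreal[rotated])
  qed
  have "(\<integral>\<^sup>+g. H (\<lambda>j. if j < k then t + g j else 0) \<partial>PiM UNIV (\<lambda>_. std_normal))
      = (\<integral>\<^sup>+g. (\<lambda>x. F (\<lambda>j\<in>?K. t + x j)) (restrict g ?K) \<partial>PiM UNIV (\<lambda>_. std_normal))"
    by (auto intro!: nn_integral_cong arg_cong[where f=H] simp: F_def)
  also have "\<dots> = (\<integral>\<^sup>+x. F (\<lambda>j\<in>?K. t + x j) \<partial>PiM ?K (\<lambda>_. std_normal))"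
    by (rule nn_integral_PiM_UNIV_restrict[OF _ std_normal_prob G1m]) simp
  also have "\<dots> = (\<integral>\<^sup>+x. F x * (\<Prod>j\<in>?K. ennreal (gd t (x j))) \<partial>PiM ?K (\<lambda>_. std_normal))"
    by (rule nn_integral_PiM_shift[OF _ Fm]) simp
  also have "\<dots> = (\<integral>\<^sup>+g. (\<lambda>x. F x * (\<Prod>j\<in>?K. ennreal (gd t (x j)))) (restrict g ?K) \<partial>PiM UNIV (\<lambda>_. std_normal))"
    by (rule nn_integral_PiM_UNIV_restrict[OF _ std_normal_prob G2m, symmetric]) simp
  also have "\<dots> = (\<integral>\<^sup>+g. H (\<lambda>j. if j < k then g j else 0) * (\<Prod>j\<in>{..<k}. ennreal (gd t (g j))) \<partial>PiM UNIV (\<lambda>_. std_normal))"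
    by (intro nn_integral_cong) (simp add: F_def rr)
  finally show ?thesis .
qed


definition lr :: "real \<Rightarrow> nat \<times> (nat \<Rightarrow> real) \<Rightarrow> real" where
  "lr t z = (\<Prod>j\<in>{..<fst z}. gd t (snd z j))"

lemma lr_nonneg[simp]: "0 \<le> lr t z"
  unfolding lr_def by (intro prod_nonneg) simp

lemma sets_obs_space: "sets obs_space = sets (count_space UNIV \<Otimes>\<^sub>M PiM UNIV (\<lambda>_::nat. borel::real measure))"
  unfolding obs_space_def ..

lemma lr_measurable: "lr t \<in> borel_measurable obs_space"
  unfolding obs_space_def
proof (rule measurable_pair_measure_countable1)
  fix k :: nat
  show "(\<lambda>y. lr t (k, y)) \<in> borel_measurable (PiM UNIV (\<lambda>_. borel))"
    unfolding lr_def by simp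
qed simp

lemma lr_measurable'[measurable]: "(\<lambda>z. ennreal (lr t z)) \<in> borel_measurable obs_space"
  using lr_measurable by measurable

lemma Phi_measurable:
  "(\<lambda>(k, g). (k, \<lambda>j. if j < k then t + g j else 0)) \<in>
     (measure_pmf p \<Otimes>\<^sub>M PiM UNIV (\<lambda>_::nat. std_normal)) \<rightarrow>\<^sub>M obs_space"
proof -
  have s: "sets (measure_pmf p \<Otimes>\<^sub>M PiM UNIV (\<lambda>_::nat. std_normal)) = sets (count_space UNIV \<Otimes>\<^sub>M PiM UNIV (\<lambda>_::nat. borel::real measure))"
    by (intro sets_pair_measure_cong sets_PiM_cong) auto
  have "(\<lambda>(k, g). (k, \<lambda>j. if j < k then t + g j else (0::real))) \<in>
     (count_space UNIV \<Otimes>\<^sub>M PiM UNIV (\<lambda>_::nat. borel::real measure)) \<rightarrow>\<^sub>M obs_space"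
  proof (rule measurable_pair_measure_countable1)
    fix k :: nat
    have "(\<lambda>g::nat\<Rightarrow>real. \<lambda>j. if j < k then t + g j else 0) \<in> PiM UNIV (\<lambda>_. borel) \<rightarrow>\<^sub>M PiM UNIV (\<lambda>_. borel)"
    proof (rule measurable_PiM_single')
      fix j :: nat
      show "(\<lambda>\<omega>::nat\<Rightarrow>real. if j < k then t + \<omega> j else 0) \<in> borel_measurable (PiM UNIV (\<lambda>_. borel))"
      proof (cases "j < k")
        case True then show ?thesis by simp
      next
        case False then show ?thesis by simp
      qed
    qed auto
    then show "(\<lambda>g. case (k, g) of (k, g) \<Rightarrow> (k, \<lambda>j. if j < k then t + g j else 0)) \<in> PiM UNIV (\<lambda>_. borel) \<rightarrow>\<^sub>M obs_space"
      unfolding obs_space_def by simp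
  qed simp
  then show ?thesis by (simp add: measurable_cong_sets[OF s refl])
qed

lemma obs_int:
  assumes lam: "0 < lam" and h[measurable]: "h \<in> borel_measurable obs_space"
  shows "(\<integral>\<^sup>+z. h z \<partial>obs_coord lam t) = (\<integral>\<^sup>+z. h z * ennreal (lr t z) \<partial>obs_coord lam 0)"
proof -
  interpret PN: prob_space "PiM UNIV (\<lambda>_::nat. std_normal)" by (rule prob_PiM_N)
  let ?P = "measure_pmf (poisson_pmf lam) \<Otimes>\<^sub>M PiM UNIV (\<lambda>_::nat. std_normal)"
  have Hk: "(\<lambda>y. h (k, y)) \<in> borel_measurable (PiM UNIV (\<lambda>_::nat. borel::real measure))" for k
    using h unfolding obs_space_def by measurable
  have m1: "(\<lambda>x. h ((\<lambda>(k, g). (k, \<lambda>j. if j < k then s + g j else 0)) x)) \<in> borel_measurable ?P" for s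
    using Phi_measurable h by (rule measurable_compose)
  have Phi0: "(\<lambda>(k, g). (k, \<lambda>j. if j < k then g j else (0::real))) \<in> ?P \<rightarrow>\<^sub>M obs_space"
    using Phi_measurable[of 0] by (simp cong: if_cong)
  have oc0: "obs_coord lam 0 = distr ?P obs_space (\<lambda>(k, g). (k, \<lambda>j. if j < k then g j else 0))"
    by (simp add: obs_coord_def cong: if_cong)
  have m2: "(\<lambda>x. h ((\<lambda>(k, g). (k, \<lambda>j. if j < k then g j else 0)) x) * ennreal (lr t ((\<lambda>(k, g). (k, \<lambda>j. if j < k then g j else 0)) x))) \<in> borel_measurable ?P"
    using Phi0 by measurable
  have eqk: "(\<integral>\<^sup>+g. h (k, \<lambda>j. if j < k then t + g j else 0) \<partial>PiM UNIV (\<lambda>_. std_normal))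
       = (\<integral>\<^sup>+g. h (k, \<lambda>j. if j < k then g j else 0) * ennreal (lr t (k, \<lambda>j. if j < k then g j else 0)) \<partial>PiM UNIV (\<lambda>_. std_normal))" for k
  proof -
    have "(\<integral>\<^sup>+g. h (k, \<lambda>j. if j < k then t + g j else 0) \<partial>PiM UNIV (\<lambda>_. std_normal))
       = (\<integral>\<^sup>+g. h (k, \<lambda>j. if j < k then g j else 0) * (\<Prod>j\<in>{..<k}. ennreal (gd t (g j))) \<partial>PiM UNIV (\<lambda>_. std_normal))"
      by (rule shift_trunc_integral[OF Hk])
    also have "\<dots> = (\<integral>\<^sup>+g. h (k, \<lambda>j. if j < k then g j else 0) * ennreal (lr t (k, \<lambda>j. if j < k then g j else 0)) \<partial>PiM UNIV (\<lambda>_. std_normal))"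
      by (intro nn_integral_cong) (simp add: lr_def prod_ennreal)
    finally show ?thesis .
  qed
  have "(\<integral>\<^sup>+z. h z \<partial>obs_coord lam t) = (\<integral>\<^sup>+x. h ((\<lambda>(k, g). (k, \<lambda>j. if j < k then t + g j else 0)) x) \<partial>?P)"
    unfolding obs_coord_def by (rule nn_integral_distr[OF Phi_measurable]) simp
  also have "\<dots> = (\<integral>\<^sup>+k. \<integral>\<^sup>+g. h (k, \<lambda>j. if j < k then t + g j else 0) \<partial>PiM UNIV (\<lambda>_. std_normal) \<partial>measure_pmf (poisson_pmf lam))"
    using PN.nn_integral_fst[OF m1[of t]] by simp
  also have "\<dots> = (\<integral>\<^sup>+k. \<integral>\<^sup>+g. h (k, \<lambda>j. if j < k then g j else 0) * ennreal (lr t (k, \<lambda>j. if j < k then g j else 0)) \<partial>PiM UNIV (\<lambda>_. std_normal) \<partial>measure_pmf (poisson_pmf lam))"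
    by (intro nn_integral_cong eqk)
  also have "\<dots> = (\<integral>\<^sup>+x. h ((\<lambda>(k, g). (k, \<lambda>j. if j < k then g j else 0)) x) * ennreal (lr t ((\<lambda>(k, g). (k, \<lambda>j. if j < k then g j else 0)) x)) \<partial>?P)"
    using PN.nn_integral_fst[OF m2] by simp
  also have "\<dots> = (\<integral>\<^sup>+z. h z * ennreal (lr t z) \<partial>obs_coord lam 0)"
    unfolding oc0 by (rule nn_integral_distr[OF Phi0, symmetric]) simp
  finally show ?thesis .
qed


declare lr_measurable[measurable]

lemma obs_coord_prob: assumes "0 < lam" shows "prob_space (obs_coord lam t)"
proof -
  interpret PN: prob_space "PiM UNIV (\<lambda>_::nat. std_normal)" by (rule prob_PiM_N)
  interpret PP: pair_prob_space "measure_pmf (poisson_pmf lam)" "PiM UNIV (\<lambda>_::nat. std_normal)"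
    by (simp add: pair_prob_space_def pair_sigma_finite_def prob_space_measure_pmf PN.prob_space_axioms prob_space_imp_sigma_finite)
  show ?thesis unfolding obs_coord_def
    by (rule PP.P.prob_space_distr[OF Phi_measurable])
qed

lemma sets_obs_coord[simp]: "sets (obs_coord lam t) = sets obs_space"
  by (simp add: obs_coord_def)

lemma space_obs_coord[simp]: "space (obs_coord lam t) = space obs_space"
  by (simp add: obs_coord_def)

lemma obs_coord_density:
  assumes lam: "0 < lam"
  shows "obs_coord lam t = density (obs_coord lam 0) (\<lambda>z. ennreal (lr t z))"
proof (rule measure_eqI)
  fix A assume "A \<in> sets (obs_coord lam t)"
  then have A[measurable]: "A \<in> sets obs_space" by simp
  have "emeasure (obs_coord lam t) A = (\<integral>\<^sup>+z. indicator A z \<partial>obs_coord lam t)"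
    by (simp add: nn_integral_indicator)
  also have "\<dots> = (\<integral>\<^sup>+z. indicator A z * ennreal (lr t z) \<partial>obs_coord lam 0)"
    using lam by (rule obs_int) simp
  also have "\<dots> = emeasure (density (obs_coord lam 0) (\<lambda>z. ennreal (lr t z))) A"
    by (subst emeasure_density) (auto simp: mult.commute measurable_cong_sets[OF sets_obs_coord refl] intro!: nn_integral_cong)
  finally show "emeasure (obs_coord lam t) A = emeasure (density (obs_coord lam 0) (\<lambda>z. ennreal (lr t z))) A" .
qed simp

lemma gd_shift: "gd b (a + x) = exp (a * b) * gd b x"
  by (simp add: gd_def exp_add[symmetric] algebra_simps)

lemma gauss_gd_shift: "(\<integral>\<^sup>+x. ennreal (gd b (a + x)) \<partial>std_normal) = ennreal (exp (a * b))"
proof -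
  have "(\<integral>\<^sup>+x. ennreal (gd b (a + x)) \<partial>std_normal) = (\<integral>\<^sup>+x. ennreal (exp (a * b)) * ennreal (gd b x) \<partial>std_normal)"
    by (intro nn_integral_cong) (simp add: gd_shift ennreal_mult)
  also have "\<dots> = ennreal (exp (a * b)) * (\<integral>\<^sup>+x. ennreal (gd b x) \<partial>std_normal)"
    by (rule nn_integral_cmult) simp
  also have "(\<integral>\<^sup>+x. ennreal (gd b x) \<partial>std_normal) = 1"
    using gauss_mgf[of b] by (simp add: gd_def)
  finally show ?thesis by simp
qed

lemma inner_prod_integral:
  "(\<integral>\<^sup>+g. ennreal (\<Prod>j\<in>{..<k}. gd b (a + g j)) \<partial>PiM UNIV (\<lambda>_. std_normal)) = ennreal (exp (a * b) ^ k)"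
proof -
  let ?K = "{..<k}"
  interpret Mp: product_prob_space "\<lambda>_::nat. std_normal" UNIV
    using std_normal_prob by (simp add: product_prob_space_def product_prob_space_axioms_def product_sigma_finite_def prob_space_imp_sigma_finite)
  define F where "F x = (\<Prod>j\<in>?K. ennreal (gd b (a + x j)))" for x :: "nat \<Rightarrow> real"
  have sK: "sets (PiM ?K (\<lambda>_. std_normal)) = sets (PiM ?K (\<lambda>_. borel))"
    by (rule sets_PiM_cong) auto
  have Fm: "F \<in> borel_measurable (PiM ?K (\<lambda>_. std_normal))"
  proof -
    have "F \<in> borel_measurable (PiM ?K (\<lambda>_. borel))"
      unfolding F_def
    proof (rule borel_measurable_prod_ennreal)
      fix j assume "j \<in> ?K"
      show "(\<lambda>x. ennreal (gd b (a + x j))) \<in> borel_measurable (PiM ?K (\<lambda>_. borel))"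
        by (rule measurable_compose[OF measurable_component_singleton[OF \<open>j \<in> ?K\<close>]]) simp
    qed
    then show ?thesis by (simp add: measurable_cong_sets[OF sK refl])
  qed
  have "(\<integral>\<^sup>+g. ennreal (\<Prod>j\<in>{..<k}. gd b (a + g j)) \<partial>PiM UNIV (\<lambda>_. std_normal))
      = (\<integral>\<^sup>+g. F (restrict g ?K) \<partial>PiM UNIV (\<lambda>_. std_normal))"
    by (intro nn_integral_cong) (simp add: F_def prod_ennreal)
  also have "\<dots> = (\<integral>\<^sup>+x. F x \<partial>PiM ?K (\<lambda>_. std_normal))"
    by (rule nn_integral_PiM_UNIV_restrict[OF _ std_normal_prob Fm]) simp
  also have "\<dots> = (\<Prod>j\<in>?K. \<integral>\<^sup>+y. ennreal (gd b (a + y)) \<partial>std_normal)"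
    unfolding F_def by (rule Mp.product_nn_integral_prod) auto
  also have "\<dots> = ennreal (exp (a * b) ^ k)"
    by (simp add: gauss_gd_shift prod_ennreal ennreal_power)
  finally show ?thesis .
qed

lemma poisson_exp_sum:
  assumes lam: "0 < lam" and q: "0 \<le> q"
  shows "(\<integral>\<^sup>+k. ennreal (q ^ k) \<partial>measure_pmf (poisson_pmf lam)) = ennreal (exp (lam * (q - 1)))"
proof -
  have "(\<integral>\<^sup>+k. ennreal (q ^ k) \<partial>measure_pmf (poisson_pmf lam))
      = (\<integral>\<^sup>+k. ennreal (pmf (poisson_pmf lam) k * q ^ k) \<partial>count_space UNIV)"
    unfolding nn_integral_measure_pmf by (intro nn_integral_cong) (simp add: ennreal_mult q)
  also have "\<dots> = (\<Sum>k. ennreal (pmf (poisson_pmf lam) k * q ^ k))"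
    by (rule nn_integral_count_space_nat)
  also have "\<dots> = ennreal (exp (-lam) * exp (lam * q))"
  proof (rule suminf_ennreal_eq)
    show "0 \<le> pmf (poisson_pmf lam) k * q ^ k" for k using q by simp
    have "(\<lambda>k. exp (-lam) * ((lam * q) ^ k /\<^sub>R fact k)) sums (exp (-lam) * exp (lam * q))"
      by (intro sums_mult exp_converges)
    moreover have "exp (-lam) * ((lam * q) ^ k /\<^sub>R fact k) = pmf (poisson_pmf lam) k * q ^ k" for k
      using lam by (simp add: power_mult_distrib divide_inverse algebra_simps)
    ultimately show "(\<lambda>k. pmf (poisson_pmf lam) k * q ^ k) sums (exp (-lam) * exp (lam * q))" by simp
  qed
  also have "exp (-lam) * exp (lam * q) = exp (lam * (q - 1))"
    by (simp add: exp_add[symmetric] algebra_simps)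
  finally show ?thesis .
qed

lemma lr_pair_int:
  assumes lam: "0 < lam"
  shows "(\<integral>\<^sup>+z. ennreal (lr b z) * ennreal (lr a z) \<partial>obs_coord lam 0) = ennreal (exp (lam * (exp (a * b) - 1)))"
proof -
  interpret PN: prob_space "PiM UNIV (\<lambda>_::nat. std_normal)" by (rule prob_PiM_N)
  let ?P = "measure_pmf (poisson_pmf lam) \<Otimes>\<^sub>M PiM UNIV (\<lambda>_::nat. std_normal)"
  have m1: "(\<lambda>x. ennreal (lr b ((\<lambda>(k, g). (k, \<lambda>j. if j < k then a + g j else 0)) x))) \<in> borel_measurable ?P"
    using Phi_measurable by measurable
  have "(\<integral>\<^sup>+z. ennreal (lr b z) * ennreal (lr a z) \<partial>obs_coord lam 0) = (\<integral>\<^sup>+z. ennreal (lr b z) \<partial>obs_coord lam a)"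
    using lam by (rule obs_int[symmetric]) simp
  also have "\<dots> = (\<integral>\<^sup>+x. ennreal (lr b ((\<lambda>(k, g). (k, \<lambda>j. if j < k then a + g j else 0)) x)) \<partial>?P)"
    unfolding obs_coord_def by (rule nn_integral_distr[OF Phi_measurable]) simp
  also have "\<dots> = (\<integral>\<^sup>+k. \<integral>\<^sup>+g. ennreal (lr b (k, \<lambda>j. if j < k then a + g j else 0)) \<partial>PiM UNIV (\<lambda>_. std_normal) \<partial>measure_pmf (poisson_pmf lam))"
    using PN.nn_integral_fst[OF m1] by simp
  also have "\<dots> = (\<integral>\<^sup>+k. ennreal (exp (a * b) ^ k) \<partial>measure_pmf (poisson_pmf lam))"
  proof (intro nn_integral_cong)
    fix k :: nat
    have "(\<integral>\<^sup>+g. ennreal (lr b (k, \<lambda>j. if j < k then a + g j else 0)) \<partial>PiM UNIV (\<lambda>_. std_normal))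
        = (\<integral>\<^sup>+g. ennreal (\<Prod>j\<in>{..<k}. gd b (a + g j)) \<partial>PiM UNIV (\<lambda>_. std_normal))"
      by (intro nn_integral_cong) (simp add: lr_def)
    also have "\<dots> = ennreal (exp (a * b) ^ k)" by (rule inner_prod_integral)
    finally show "(\<integral>\<^sup>+g. ennreal (lr b (k, \<lambda>j. if j < k then a + g j else 0)) \<partial>PiM UNIV (\<lambda>_. std_normal)) = ennreal (exp (a * b) ^ k)" .
  qed
  also have "\<dots> = ennreal (exp (lam * (exp (a * b) - 1)))"
    using lam by (rule poisson_exp_sum) simp
  finally show ?thesis .
qed


definition Lt :: "nat \<Rightarrow> (nat \<Rightarrow> real) \<Rightarrow> (nat \<Rightarrow> nat \<times> (nat \<Rightarrow> real)) \<Rightarrow> real" where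
  "Lt d \<theta> y = (\<Prod>i\<in>{..<d}. lr (\<theta> i) (y i))"

lemma Lt_nonneg[simp]: "0 \<le> Lt d \<theta> y"
  unfolding Lt_def by (intro prod_nonneg) simp

lemma sets_obs_law[simp]: "sets (obs_law d lam \<theta>) = sets (obs_full_space d)"
  unfolding obs_law_def obs_full_space_def by (rule sets_PiM_cong) auto

lemma space_obs_law[simp]: "space (obs_law d lam \<theta>) = space (obs_full_space d)"
  using sets_eq_imp_space_eq[OF sets_obs_law] .

lemma Lt_measurable: "Lt d \<theta> \<in> borel_measurable (obs_full_space d)"
  unfolding Lt_def obs_full_space_def
proof (rule borel_measurable_prod)
  fix i assume "i \<in> {..<d}"
  show "(\<lambda>y. lr (\<theta> i) (y i)) \<in> borel_measurable (PiM {..<d} (\<lambda>_. obs_space))"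
    by (rule measurable_compose[OF measurable_component_singleton[OF \<open>i \<in> {..<d}\<close>] lr_measurable])
qed

lemma obs_law_prob: assumes "0 < lam" shows "prob_space (obs_law d lam \<theta>)"
proof -
  interpret Mp: product_prob_space "\<lambda>i. obs_coord lam (\<theta> i)" "{..<d}"
    using obs_coord_prob[OF assms] by (simp add: product_prob_space_def product_prob_space_axioms_def product_sigma_finite_def prob_space_imp_sigma_finite)
  show ?thesis unfolding obs_law_def by (rule Mp.P.prob_space_axioms)
qed

lemma obs_law_density:
  assumes lam: "0 < lam"
  shows "obs_law d lam \<theta> = density (obs_law d lam (\<lambda>_. 0)) (\<lambda>y. ennreal (Lt d \<theta> y))"
proof -
  have "obs_law d lam \<theta> = PiM {..<d} (\<lambda>i. density (obs_coord lam 0) (\<lambda>z. ennreal (lr (\<theta> i) z)))"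
    unfolding obs_law_def by (intro PiM_cong refl) (rule obs_coord_density[OF lam])
  also have "\<dots> = density (PiM {..<d} (\<lambda>i. obs_coord lam 0)) (\<lambda>y. \<Prod>i\<in>{..<d}. ennreal (lr (\<theta> i) (y i)))"
  proof (rule PiM_density)
    show "prob_space (obs_coord lam 0)" for i :: nat using obs_coord_prob[OF lam] .
    show "(\<lambda>z. ennreal (lr (\<theta> i) z)) \<in> borel_measurable (obs_coord lam 0)" for i
      by (simp add: measurable_cong_sets[OF sets_obs_coord refl])
    show "prob_space (density (obs_coord lam 0) (\<lambda>z. ennreal (lr (\<theta> i) z)))" for i
      using obs_coord_prob[OF lam, of "\<theta> i"] unfolding obs_coord_density[OF lam, of "\<theta> i"] .
  qed simp
  also have "\<dots> = density (obs_law d lam (\<lambda>_. 0)) (\<lambda>y. ennreal (Lt d \<theta> y))"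
    unfolding obs_law_def Lt_def by (simp add: prod_ennreal)
  finally show ?thesis .
qed

lemma Lt_pair_int:
  assumes lam: "0 < lam"
  shows "(\<integral>\<^sup>+y. ennreal (Lt d \<theta> y) * ennreal (Lt d \<theta>' y) \<partial>obs_law d lam (\<lambda>_. 0))
       = ennreal (\<Prod>i\<in>{..<d}. exp (lam * (exp (\<theta> i * \<theta>' i) - 1)))"
proof -
  interpret Mp: product_prob_space "\<lambda>i::nat. obs_coord lam 0" "{..<d}"
    using obs_coord_prob[OF lam] by (simp add: product_prob_space_def product_prob_space_axioms_def product_sigma_finite_def prob_space_imp_sigma_finite)
  have "(\<integral>\<^sup>+y. ennreal (Lt d \<theta> y) * ennreal (Lt d \<theta>' y) \<partial>obs_law d lam (\<lambda>_. 0))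
      = (\<integral>\<^sup>+y. (\<Prod>i\<in>{..<d}. ennreal (lr (\<theta> i) (y i)) * ennreal (lr (\<theta>' i) (y i))) \<partial>PiM {..<d} (\<lambda>i. obs_coord lam 0))"
    unfolding obs_law_def Lt_def by (intro nn_integral_cong) (simp add: prod_ennreal prod.distrib)
  also have "\<dots> = (\<Prod>i\<in>{..<d}. \<integral>\<^sup>+z. ennreal (lr (\<theta> i) z) * ennreal (lr (\<theta>' i) z) \<partial>obs_coord lam 0)"
    by (rule Mp.product_nn_integral_prod) (auto simp: measurable_cong_sets[OF sets_obs_coord refl])
  also have "\<dots> = (\<Prod>i\<in>{..<d}. ennreal (exp (lam * (exp (\<theta> i * \<theta>' i) - 1))))"
    by (intro prod.cong refl) (simp add: lr_pair_int[OF lam] mult.commute)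
  also have "\<dots> = ennreal (\<Prod>i\<in>{..<d}. exp (lam * (exp (\<theta> i * \<theta>' i) - 1)))"
    by (simp add: prod_ennreal)
  finally show ?thesis .
qed


lemma Lt_ind_nn:
  assumes lam: "0 < lam" and A: "A \<in> sets (obs_full_space d)"
  shows "(\<integral>\<^sup>+y. ennreal (Lt d \<theta> y * indicator A y) \<partial>obs_law d lam (\<lambda>_. 0)) = emeasure (obs_law d lam \<theta>) A"
proof -
  have Lm: "(\<lambda>y. ennreal (Lt d \<theta> y)) \<in> borel_measurable (obs_law d lam (\<lambda>_. 0))"
    using Lt_measurable by (simp add: measurable_cong_sets[OF sets_obs_law refl])
  have "emeasure (obs_law d lam \<theta>) A = emeasure (density (obs_law d lam (\<lambda>_. 0)) (\<lambda>y. ennreal (Lt d \<theta> y))) A"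
    using obs_law_density[OF lam, of d \<theta>] by simp
  also have "\<dots> = (\<integral>\<^sup>+y. ennreal (Lt d \<theta> y) * indicator A y \<partial>obs_law d lam (\<lambda>_. 0))"
    using Lm A by (intro emeasure_density) auto
  finally show ?thesis
    by (simp add: indicator_mult_ennreal mult.commute)
qed

lemma Lt_ind_integrable:
  assumes lam: "0 < lam" and A: "A \<in> sets (obs_full_space d)"
  shows "integrable (obs_law d lam (\<lambda>_. 0)) (\<lambda>y. Lt d \<theta> y * indicator A y)"
    and "measure (obs_law d lam \<theta>) A = (\<integral>y. Lt d \<theta> y * indicator A y \<partial>obs_law d lam (\<lambda>_. 0))"
proof -
  interpret P: prob_space "obs_law d lam \<theta>" by (rule obs_law_prob[OF lam])
  have m: "(\<lambda>y. Lt d \<theta> y * indicator A y) \<in> borel_measurable (obs_law d lam (\<lambda>_. 0))"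
    using Lt_measurable A by (simp add: measurable_cong_sets[OF sets_obs_law refl])
  have fin: "emeasure (obs_law d lam \<theta>) A < \<infinity>"
    by (simp add: less_top[symmetric])
  show int: "integrable (obs_law d lam (\<lambda>_. 0)) (\<lambda>y. Lt d \<theta> y * indicator A y)"
    using m fin Lt_ind_nn[OF lam A, of \<theta>] by (intro integrableI_nonneg) auto
  have "ennreal (\<integral>y. Lt d \<theta> y * indicator A y \<partial>obs_law d lam (\<lambda>_. 0)) = emeasure (obs_law d lam \<theta>) A"
    using Lt_ind_nn[OF lam A, of \<theta>] int by (subst nn_integral_eq_integral[symmetric]) auto
  then have "ennreal (\<integral>y. Lt d \<theta> y * indicator A y \<partial>obs_law d lam (\<lambda>_. 0)) = ennreal (measure (obs_law d lam \<theta>) A)"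
    by (simp add: P.emeasure_eq_measure)
  then show "measure (obs_law d lam \<theta>) A = (\<integral>y. Lt d \<theta> y * indicator A y \<partial>obs_law d lam (\<lambda>_. 0))"
    by (subst (asm) ennreal_inj) (auto intro!: integral_nonneg_AE)
qed

lemma Lt_prod_integrable:
  assumes lam: "0 < lam"
  shows "integrable (obs_law d lam (\<lambda>_. 0)) (\<lambda>y. Lt d \<theta> y * Lt d \<theta>' y)"
    and "(\<integral>y. Lt d \<theta> y * Lt d \<theta>' y \<partial>obs_law d lam (\<lambda>_. 0)) = (\<Prod>i\<in>{..<d}. exp (lam * (exp (\<theta> i * \<theta>' i) - 1)))"
proof -
  have m: "(\<lambda>y. Lt d \<theta> y * Lt d \<theta>' y) \<in> borel_measurable (obs_law d lam (\<lambda>_. 0))"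
    using Lt_measurable by (simp add: measurable_cong_sets[OF sets_obs_law refl])
  have nn: "(\<integral>\<^sup>+y. ennreal (Lt d \<theta> y * Lt d \<theta>' y) \<partial>obs_law d lam (\<lambda>_. 0)) = ennreal (\<Prod>i\<in>{..<d}. exp (lam * (exp (\<theta> i * \<theta>' i) - 1)))"
    using Lt_pair_int[OF lam, of d \<theta> \<theta>'] by (simp add: ennreal_mult)
  show int: "integrable (obs_law d lam (\<lambda>_. 0)) (\<lambda>y. Lt d \<theta> y * Lt d \<theta>' y)"
    using m nn by (intro integrableI_nonneg) auto
  have "ennreal (\<integral>y. Lt d \<theta> y * Lt d \<theta>' y \<partial>obs_law d lam (\<lambda>_. 0)) = ennreal (\<Prod>i\<in>{..<d}. exp (lam * (exp (\<theta> i * \<theta>' i) - 1)))"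
    using nn int by (subst nn_integral_eq_integral[symmetric]) auto
  then show "(\<integral>y. Lt d \<theta> y * Lt d \<theta>' y \<partial>obs_law d lam (\<lambda>_. 0)) = (\<Prod>i\<in>{..<d}. exp (lam * (exp (\<theta> i * \<theta>' i) - 1)))"
    by (subst (asm) ennreal_inj) (auto intro!: integral_nonneg_AE prod_nonneg)
qed


lemma test_bound:
  fixes B :: "'b set" and w :: "'b \<Rightarrow> real" and \<theta> :: "'b \<Rightarrow> nat \<Rightarrow> real"
  assumes lam: "0 < lam" and A: "A \<in> sets (obs_full_space d)"
    and B: "finite B" and w: "\<And>b. b \<in> B \<Longrightarrow> 0 \<le> w b" and w1: "(\<Sum>b\<in>B. w b) = 1"
  shows "(\<Sum>b\<in>B. w b * measure (obs_law d lam (\<theta> b)) A) - measure (obs_law d lam (\<lambda>_. 0)) A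
     \<le> 1/8 + 2 * ((\<Sum>b\<in>B. \<Sum>b'\<in>B. w b * w b' * (\<Prod>i\<in>{..<d}. exp (lam * (exp (\<theta> b i * \<theta> b' i) - 1)))) - 1)"
proof -
  let ?P = "obs_law d lam (\<lambda>_. 0)"
  interpret P: prob_space ?P by (rule obs_law_prob[OF lam])
  define L where "L y = (\<Sum>b\<in>B. w b * Lt d (\<theta> b) y)" for y
  define S where "S = (\<Sum>b\<in>B. \<Sum>b'\<in>B. w b * w b' * (\<Prod>i\<in>{..<d}. exp (lam * (exp (\<theta> b i * \<theta> b' i) - 1))))"
  have sp: "space (obs_full_space d) \<in> sets (obs_full_space d)" by simp
  have intA: "integrable ?P (\<lambda>y. L y * indicator A y)"
    unfolding L_def sum_distrib_right mult.assoc
    by (simp add: Lt_ind_integrable(1)[OF lam A])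
  have eqA: "(\<Sum>b\<in>B. w b * measure (obs_law d lam (\<theta> b)) A) = (\<integral>y. L y * indicator A y \<partial>?P)"
    unfolding L_def sum_distrib_right mult.assoc
    by (simp add: Lt_ind_integrable[OF lam A])
  have ind_sp: "\<And>y. y \<in> space ?P \<Longrightarrow> indicator (space (obs_full_space d)) y = (1::real)" by simp
  have intL: "integrable ?P L"
  proof -
    have "integrable ?P (\<lambda>y. L y * indicator (space (obs_full_space d)) y)"
      unfolding L_def sum_distrib_right mult.assoc
      by (simp add: Lt_ind_integrable(1)[OF lam sp])
    moreover have "integrable ?P (\<lambda>y. L y * indicator (space (obs_full_space d)) y) = integrable ?P L"
      by (rule Bochner_Integration.integrable_cong) auto
    ultimately show ?thesis by simp
  qed
  have intL1: "(\<integral>y. L y \<partial>?P) = 1"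
  proof -
    have "(\<integral>y. L y \<partial>?P) = (\<integral>y. L y * indicator (space (obs_full_space d)) y \<partial>?P)"
      by (intro Bochner_Integration.integral_cong) auto
    also have "\<dots> = (\<Sum>b\<in>B. w b * measure (obs_law d lam (\<theta> b)) (space (obs_full_space d)))"
      unfolding L_def sum_distrib_right mult.assoc
      by (simp add: Lt_ind_integrable[OF lam sp])
    also have "\<dots> = (\<Sum>b\<in>B. w b)"
    proof (intro sum.cong refl)
      fix b
      interpret Pb: prob_space "obs_law d lam (\<theta> b)" by (rule obs_law_prob[OF lam])
      show "w b * measure (obs_law d lam (\<theta> b)) (space (obs_full_space d)) = w b"
        using Pb.prob_space by simp
    qed
    finally show ?thesis using w1 by simp
  qed
  have L2: "(\<lambda>y. L y * L y) = (\<lambda>y. \<Sum>b\<in>B. \<Sum>b'\<in>B. w b * w b' * (Lt d (\<theta> b) y * Lt d (\<theta> b') y))"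
    by (auto simp: L_def sum_distrib_left sum_distrib_right ac_simps intro!: sum.cong)
  have intL2: "integrable ?P (\<lambda>y. L y * L y)"
    unfolding L2 by (simp add: Lt_prod_integrable(1)[OF lam])
  have intL2v: "(\<integral>y. L y * L y \<partial>?P) = S"
    unfolding L2 S_def
    by (simp add: integral_sum integrable_sum integrable_mult_right Lt_prod_integrable[OF lam])
  have intA0: "integrable ?P (\<lambda>y. indicator A y :: real)"
    using A by (intro P.integrable_const_bound[where B=1]) (auto simp: measurable_cong_sets[OF sets_obs_law refl])
  have mA: "measure ?P A = (\<integral>y. indicator A y \<partial>?P)"
    using A by simp
  have "(\<Sum>b\<in>B. w b * measure (obs_law d lam (\<theta> b)) A) - measure ?P A = (\<integral>y. L y * indicator A y - indicator A y \<partial>?P)"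
    unfolding eqA mA using intA intA0 by simp
  also have "\<dots> \<le> (\<integral>y. 2 * (L y * L y) - 4 * L y + (2 + 1/8) \<partial>?P)"
  proof (rule Bochner_Integration.integral_mono)
    show "integrable ?P (\<lambda>y. L y * indicator A y - indicator A y)" using intA intA0 by simp
    show "integrable ?P (\<lambda>y. 2 * (L y * L y) - 4 * L y + (2 + 1/8))"
      using intL intL2 by simp
    fix y
    have "L y * indicator A y - indicator A y \<le> 2 * (L y - 1)^2 + 1/8"
    proof (cases "y \<in> A")
      case True
      have "0 \<le> 2 * (L y - 1 - 1/4)^2" by simp
      then show ?thesis using True by (simp add: power2_eq_square algebra_simps)
    next
      case False then show ?thesis by simp
    qed
    then show "L y * indicator A y - indicator A y \<le> 2 * (L y * L y) - 4 * L y + (2 + 1/8)"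
      by (simp add: power2_eq_square algebra_simps)
  qed
  also have "\<dots> = 2 * S - 4 + (2 + 1/8)"
    using intL intL2 intL1 intL2v P.prob_space by simp
  finally show ?thesis unfolding S_def by simp
qed


definition Bs :: "nat \<Rightarrow> (nat \<Rightarrow> bool) set" where
  "Bs d = PiE {..<d} (\<lambda>_. UNIV)"

definition wt :: "nat \<Rightarrow> real \<Rightarrow> (nat \<Rightarrow> bool) \<Rightarrow> real" where
  "wt d p b = (\<Prod>i\<in>{..<d}. if b i then p else 1 - p)"

definition thb :: "nat \<Rightarrow> real \<Rightarrow> (nat \<Rightarrow> bool) \<Rightarrow> nat \<Rightarrow> real" where
  "thb d t b = (\<lambda>i. if i < d \<and> b i then t else 0)"

lemma finite_Bs: "finite (Bs d)"
  unfolding Bs_def by (intro finite_PiE) auto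

lemma wt_nonneg: "0 \<le> p \<Longrightarrow> p \<le> 1 \<Longrightarrow> 0 \<le> wt d p b"
  unfolding wt_def by (intro prod_nonneg) auto

lemma UNIV_bool_sum: "(\<Sum>x\<in>(UNIV::bool set). f x) = f False + f True"
  by (simp add: UNIV_bool)

lemma wt_sum: "(\<Sum>b\<in>Bs d. wt d p b) = 1"
proof -
  have "(\<Sum>b\<in>Bs d. wt d p b) = (\<Prod>i\<in>{..<d}. \<Sum>\<beta>\<in>(UNIV::bool set). if \<beta> then p else 1 - p)"
    unfolding Bs_def wt_def by (rule prod_sum_PiE[symmetric]) auto
  also have "\<dots> = 1" by (simp add: UNIV_bool_sum)
  finally show ?thesis .
qed

lemma sum_weighted_prod:
  fixes g :: "bool \<Rightarrow> bool \<Rightarrow> real"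
  shows "(\<Sum>b\<in>Bs d. \<Sum>b'\<in>Bs d. \<Prod>i\<in>{..<d}. g (b i) (b' i)) = (\<Sum>\<beta>\<in>UNIV. \<Sum>\<beta>'\<in>UNIV. g \<beta> \<beta>') ^ d"
proof -
  have "(\<Sum>b\<in>Bs d. \<Sum>b'\<in>Bs d. \<Prod>i\<in>{..<d}. g (b i) (b' i)) = (\<Sum>b\<in>Bs d. \<Prod>i\<in>{..<d}. \<Sum>\<beta>'\<in>UNIV. g (b i) \<beta>')"
    unfolding Bs_def by (intro sum.cong refl prod_sum_PiE[symmetric]) auto
  also have "\<dots> = (\<Prod>i\<in>{..<d}. \<Sum>\<beta>\<in>UNIV. \<Sum>\<beta>'\<in>UNIV. g \<beta> \<beta>')"
    unfolding Bs_def by (rule prod_sum_PiE[symmetric, where f="\<lambda>i \<beta>. \<Sum>\<beta>'\<in>UNIV. g \<beta> \<beta>'"]) auto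
  finally show ?thesis by simp
qed

lemma S_closed:
  "(\<Sum>b\<in>Bs d. \<Sum>b'\<in>Bs d. wt d p b * wt d p b' * (\<Prod>i\<in>{..<d}. exp (lam * (exp (thb d t b i * thb d t b' i) - 1))))
   = (1 + p^2 * (exp (lam * (exp (t^2) - 1)) - 1)) ^ d"
proof -
  define g where "g \<beta> \<beta>' = (if \<beta> then p else 1 - p) * (if \<beta>' then p else 1 - p) *
      exp (lam * (exp ((if \<beta> then t else 0) * (if \<beta>' then t else 0)) - 1))" for \<beta> \<beta>' :: bool
  have "(\<Sum>b\<in>Bs d. \<Sum>b'\<in>Bs d. wt d p b * wt d p b' * (\<Prod>i\<in>{..<d}. exp (lam * (exp (thb d t b i * thb d t b' i) - 1))))
      = (\<Sum>b\<in>Bs d. \<Sum>b'\<in>Bs d. \<Prod>i\<in>{..<d}. g (b i) (b' i))"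
    by (intro sum.cong refl) (simp add: wt_def thb_def g_def prod.distrib)
  also have "\<dots> = (\<Sum>\<beta>\<in>UNIV. \<Sum>\<beta>'\<in>UNIV. g \<beta> \<beta>') ^ d" by (rule sum_weighted_prod)
  also have "(\<Sum>\<beta>\<in>UNIV. \<Sum>\<beta>'\<in>UNIV. g \<beta> \<beta>') = 1 + p^2 * (exp (lam * (exp (t^2) - 1)) - 1)"
    by (simp add: UNIV_bool_sum g_def power2_eq_square algebra_simps)
  finally show ?thesis .
qed

lemma thb_vecs: "thb d t b \<in> vecs d"
  by (simp add: thb_def vecs_def)

lemma l2norm_thb: "l2norm d (thb d t b) = sqrt (real (card {i\<in>{..<d}. b i}) * t^2)"
proof -
  have "(\<Sum>i<d. (thb d t b i)^2) = (\<Sum>i\<in>{i\<in>{..<d}. b i}. t^2)"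
  proof -
    have "(\<Sum>i<d. (thb d t b i)^2) = (\<Sum>i\<in>{..<d}. if b i then t^2 else 0)"
      unfolding thb_def by (intro sum.cong) auto
    also have "\<dots> = (\<Sum>i\<in>{i\<in>{..<d}. b i}. t^2)"
      by (rule sum.inter_filter[symmetric]) simp
    finally show ?thesis .
  qed
  then show ?thesis unfolding l2norm_def by simp
qed

lemma near_exp_bound:
  fixes d :: nat and b :: "nat \<Rightarrow> bool"
  assumes "0 < t"
  shows "(if real (card {i\<in>{..<d}. b i}) * t^2 \<le> X then 1 else 0) \<le>
         exp (2 * X / t^2) * (\<Prod>i\<in>{..<d}. if b i then exp (-2) else 1)"
proof -
  let ?N = "real (card {i\<in>{..<d}. b i})"
  have prodN: "(\<Prod>i\<in>{..<d}. if b i then exp (-2) else (1::real)) = exp (-2 * ?N)"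
  proof -
    have "(\<Prod>i\<in>{..<d}. if b i then exp (-2) else (1::real)) = (\<Prod>i\<in>{i\<in>{..<d}. b i}. exp (-2))"
      using prod.inter_filter[of "{..<d}" "\<lambda>_. exp (-2::real)" b] by simp
    also have "\<dots> = exp (-2) ^ card {i\<in>{..<d}. b i}" by simp
    also have "\<dots> = exp (-2 * ?N)" by (simp add: exp_of_nat_mult[symmetric] mult.commute)
    finally show ?thesis .
  qed
  show ?thesis
  proof (cases "?N * t^2 \<le> X")
    case True
    then have "?N \<le> X / t^2" using assms by (simp add: field_simps)
    then have "0 \<le> 2 * X / t^2 + (-2 * ?N)" by simp
    then have "1 \<le> exp (2 * X / t^2 + (-2 * ?N))" by simp
    also have "exp (2 * X / t^2 + (-2 * ?N)) = exp (2 * X / t^2) * exp (-2 * ?N)" by (rule exp_add)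
    finally have e: "1 \<le> exp (2 * X / t^2) * exp (-2 * ?N)" .
    show ?thesis using True e by (simp only: prodN if_True)
  next
    case False then show ?thesis by (simp add: prodN)
  qed
qed

lemma near_sum_bound:
  assumes "0 < t" "0 \<le> p" "p \<le> 1"
  shows "(\<Sum>b\<in>Bs d. wt d p b * (if real (card {i\<in>{..<d}. b i}) * t^2 \<le> X then 1 else 0))
     \<le> exp (2 * X / t^2) * (1 - p + p * exp (-2)) ^ d"
proof -
  have "(\<Sum>b\<in>Bs d. wt d p b * (if real (card {i\<in>{..<d}. b i}) * t^2 \<le> X then 1 else 0))
     \<le> (\<Sum>b\<in>Bs d. wt d p b * (exp (2 * X / t^2) * (\<Prod>i\<in>{..<d}. if b i then exp (-2) else 1)))"
    by (intro sum_mono mult_left_mono near_exp_bound wt_nonneg assms)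
  also have "\<dots> = exp (2 * X / t^2) * (\<Sum>b\<in>Bs d. \<Prod>i\<in>{..<d}. (if b i then p else 1 - p) * (if b i then exp (-2) else 1))"
    by (simp add: sum_distrib_left wt_def prod.distrib ac_simps)
  also have "(\<Sum>b\<in>Bs d. \<Prod>i\<in>{..<d}. (if b i then p else 1 - p) * (if b i then exp (-2) else 1))
      = (\<Prod>i\<in>{..<d}. \<Sum>\<beta>\<in>(UNIV::bool set). (if \<beta> then p else 1 - p) * (if \<beta> then exp (-2) else 1))"
    unfolding Bs_def by (rule prod_sum_PiE[symmetric]) auto
  also have "\<dots> = (1 - p + p * exp (-2)) ^ d"
    by (simp add: UNIV_bool_sum)
  finally show ?thesis .
qed


lemma vecs_mdiff:
  assumes th: "\<theta> \<in> vecs d"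
  shows "\<theta> \<in> monotone_diff d"
proof -
  define K where "K = (\<Sum>i<d. \<bar>\<theta> i\<bar>)"
  define u where "u i = (if i < d then \<theta> i + K * real i else 0)" for i
  define v where "v i = (if i < d then K * real i else 0)" for i
  have K0: "0 \<le> K" unfolding K_def by (intro sum_nonneg) auto
  have absle: "\<bar>\<theta> i\<bar> + \<bar>\<theta> j\<bar> \<le> K" if "i < j" "j < d" for i j
  proof -
    have "\<bar>\<theta> i\<bar> + \<bar>\<theta> j\<bar> = (\<Sum>k\<in>{i, j}. \<bar>\<theta> k\<bar>)" using that by simp
    also have "\<dots> \<le> K" unfolding K_def using that by (intro sum_mono2) auto
    finally show ?thesis .
  qed
  have "u \<in> monotone_cone d"
    unfolding monotone_cone_def vecs_def
  proof (intro CollectI conjI allI impI)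
    fix i j :: nat assume ij: "i \<le> j" "j < d"
    show "u i \<le> u j"
    proof (cases "i = j")
      case False
      then have "i < j" using ij by simp
      then have "1 \<le> real j - real i" by simp
      then have "K \<le> K * (real j - real i)" using K0 by (simp add: mult_le_cancel_left1)
      moreover have "\<theta> i - \<theta> j \<le> K" using absle[OF \<open>i < j\<close> ij(2)] by linarith
      ultimately show ?thesis using ij \<open>i < j\<close> unfolding u_def by (simp add: algebra_simps)
    qed simp
  qed (simp add: u_def)
  moreover have "v \<in> monotone_cone d"
    unfolding monotone_cone_def vecs_def v_def using K0
    by (auto intro!: mult_left_mono)
  moreover have "\<theta> = (\<lambda>i. u i - v i)"
    using th by (auto simp: u_def v_def vecs_def)
  ultimately show ?thesis unfolding monotone_diff_def by blast
qed

lemma enlarge_zero_iff: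
  "\<theta> \<in> enlarge d {\<lambda>_. 0} \<epsilon> \<longleftrightarrow> \<theta> \<in> vecs d \<and> l2norm d \<theta> \<le> \<epsilon>"
  by (simp add: enlarge_def)

lemma risk_lower:
  fixes d :: nat and lam \<epsilon> p t :: real
  assumes d: "1 \<le> d" and lam: "0 < lam" and eps: "0 < \<epsilon>" and p: "0 \<le> p" "p \<le> 1" and t: "0 \<le> t"
    and psi: "\<psi> \<in> measurable (obs_full_space d) (count_space UNIV)"
  shows "1 - 1/8 - 2 * ((1 + p^2 * (exp (lam * (exp (t^2) - 1)) - 1)) ^ d - 1)
      - (\<Sum>b\<in>Bs d. wt d p b * (if real (card {i\<in>{..<d}. b i}) * t^2 \<le> \<epsilon>^2 then 1 else 0))
      \<le> test_risk d lam \<psi> {\<lambda>_. 0} (monotone_diff d \<inter> pos_orthant d) \<epsilon>"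
proof -
  let ?P0 = "obs_law d lam (\<lambda>_. 0)"
  let ?F = "monotone_diff d \<inter> pos_orthant d - enlarge d {\<lambda>_. 0} \<epsilon>"
  define A where "A = {y \<in> space (obs_full_space d). \<psi> y}"
  have A: "A \<in> sets (obs_full_space d)"
  proof -
    have "\<psi> -` {True} \<inter> space (obs_full_space d) \<in> sets (obs_full_space d)"
      using psi by (rule measurable_sets) simp
    moreover have "\<psi> -` {True} \<inter> space (obs_full_space d) = A" by (auto simp: A_def)
    ultimately show ?thesis by simp
  qed
  define G where "G \<theta> = measure (obs_law d lam \<theta>) {y \<in> space (obs_law d lam \<theta>). \<not> \<psi> y}" for \<theta>
  have G: "G \<theta> = 1 - measure (obs_law d lam \<theta>) A" for \<theta>
  proof -
    interpret Pt: prob_space "obs_law d lam \<theta>" by (rule obs_law_prob[OF lam])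
    have "{y \<in> space (obs_law d lam \<theta>). \<not> \<psi> y} = space (obs_law d lam \<theta>) - A" by (auto simp: A_def)
    moreover have "A \<in> sets (obs_law d lam \<theta>)" using A by simp
    ultimately show ?thesis unfolding G_def using Pt.prob_compl[of A] by simp
  qed
  have G1: "G \<theta> \<le> 1" for \<theta>
  proof -
    interpret Pt: prob_space "obs_law d lam \<theta>" by (rule obs_law_prob[OF lam])
    show ?thesis unfolding G_def by simp
  qed
  have G0: "0 \<le> G \<theta>" for \<theta> unfolding G_def by simp
  have bdd: "bdd_above (G ` ?F)" using G1 by (intro bdd_aboveI) auto
  define SU where "SU = (SUP \<theta>\<in>?F. G \<theta>)"
  define \<theta>w where "\<theta>w = (\<lambda>i::nat. if i = 0 then 2 * \<epsilon> else 0)"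
  have \<theta>w_vecs: "\<theta>w \<in> vecs d" using d by (simp add: \<theta>w_def vecs_def)
  have "l2norm d \<theta>w = 2 * \<epsilon>"
  proof -
    have "(\<Sum>i<d. (\<theta>w i)^2) = (\<Sum>i<d. if i = 0 then (2 * \<epsilon>)^2 else 0)"
      by (intro sum.cong) (auto simp: \<theta>w_def)
    also have "\<dots> = (2 * \<epsilon>)^2" using d by (simp add: sum.delta)
    finally have "(\<Sum>i<d. (\<theta>w i)^2) = (2 * \<epsilon>)^2" .
    then show ?thesis unfolding l2norm_def using eps by (simp only: real_sqrt_abs)
  qed
  then have \<theta>wF: "\<theta>w \<in> ?F"
    using \<theta>w_vecs vecs_mdiff[OF \<theta>w_vecs] eps
    by (auto simp: pos_orthant_def enlarge_zero_iff \<theta>w_def)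
  have SU0: "0 \<le> SU" unfolding SU_def using G0[of \<theta>w] cSUP_upper[OF \<theta>wF bdd] by linarith
  define near where "near b = (real (card {i\<in>{..<d}. b i}) * t^2 \<le> \<epsilon>^2)" for b
  have farF: "thb d t b \<in> ?F" if "\<not> near b" for b
  proof -
    have "\<epsilon>^2 < real (card {i\<in>{..<d}. b i}) * t^2" using that by (simp add: near_def)
    then have "sqrt (\<epsilon>^2) < sqrt (real (card {i\<in>{..<d}. b i}) * t^2)" by (rule real_sqrt_less_mono)
    then have "\<epsilon> < l2norm d (thb d t b)" using eps by (simp add: l2norm_thb)
    then show ?thesis using thb_vecs[of d t b] vecs_mdiff[OF thb_vecs] t
      by (auto simp: pos_orthant_def enlarge_zero_iff thb_def)
  qed
  have each: "wt d p b * (1 - measure (obs_law d lam (thb d t b)) A) \<le> wt d p b * SU + wt d p b * (if near b then 1 else 0)" for b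
  proof -
    have "1 - measure (obs_law d lam (thb d t b)) A \<le> SU + (if near b then 1 else 0)"
    proof (cases "near b")
      case True
      show ?thesis using True SU0 measure_nonneg[of "obs_law d lam (thb d t b)" A] by (simp only: if_True)
    next
      case False
      have "G (thb d t b) \<le> SU" unfolding SU_def by (rule cSUP_upper[OF farF[OF False] bdd])
      then show ?thesis using False G by simp
    qed
    then show ?thesis using wt_nonneg[OF p, of d b] by (simp add: distrib_left[symmetric] mult_left_mono)
  qed
  have "(\<Sum>b\<in>Bs d. wt d p b * (1 - measure (obs_law d lam (thb d t b)) A))
      \<le> (\<Sum>b\<in>Bs d. wt d p b * SU + wt d p b * (if near b then 1 else 0))"
    by (intro sum_mono each)
  also have "\<dots> = SU + (\<Sum>b\<in>Bs d. wt d p b * (if near b then 1 else 0))"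
    by (simp add: sum.distrib sum_distrib_right[symmetric] wt_sum)
  finally have s1: "1 - (\<Sum>b\<in>Bs d. wt d p b * measure (obs_law d lam (thb d t b)) A)
      \<le> SU + (\<Sum>b\<in>Bs d. wt d p b * (if near b then 1 else 0))"
    by (simp add: right_diff_distrib sum_subtractf wt_sum)
  have tb: "(\<Sum>b\<in>Bs d. wt d p b * measure (obs_law d lam (thb d t b)) A) - measure ?P0 A
      \<le> 1/8 + 2 * ((1 + p^2 * (exp (lam * (exp (t^2) - 1)) - 1)) ^ d - 1)"
    using test_bound[OF lam A finite_Bs[of d], where w="wt d p" and \<theta>="thb d t"] wt_nonneg[OF p] wt_sum[of d p] S_closed[of d p lam t]
    by simp
  have risk: "test_risk d lam \<psi> {\<lambda>_. 0} (monotone_diff d \<inter> pos_orthant d) \<epsilon> = measure ?P0 A + SU"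
    unfolding test_risk_def SU_def G_def A_def by simp
  show ?thesis unfolding risk using s1 tb unfolding near_def by linarith
qed


lemma exp_le_lin: fixes x :: real assumes "0 \<le> x" "x \<le> 1/2" shows "exp x \<le> 1 + 2 * x"
  using exp_bound_lemma[of x] assms by simp

lemma exp_neg2: "exp (-2::real) \<le> 1/5"
proof -
  have "1 + 2 + (2::real)^2/2 \<le> exp 2" by (rule exp_lower_Taylor_quadratic) simp
  then have "5 \<le> exp (2::real)" by simp
  then show ?thesis by (simp add: exp_minus field_simps)
qed

lemma exp_neg18: "exp (-1.8::real) \<le> 1/4"
proof -
  have "1 + 1.8 + (1.8::real)^2/2 \<le> exp 1.8" by (rule exp_lower_Taylor_quadratic) simp
  moreover have "1 + 1.8 + (1.8::real)^2/2 = 4.42" by (simp add: power2_eq_square)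
  ultimately have "4 \<le> exp (1.8::real)" by simp
  then show ?thesis by (simp add: exp_minus field_simps)
qed

lemma fourth_power_bound:
  fixes d lam X c :: real
  assumes d: "0 < d" and lam: "0 < lam" and c: "0 < c" and X: "0 \<le> X"
    and h: "X \<le> c * d powr (1/4) / lam powr (3/4)"
  shows "X^4 * lam^3 \<le> c^4 * d"
proof -
  let ?a = "d powr (1/4)" and ?b = "lam powr (3/4)"
  have b0: "0 < ?b" using lam by simp
  have a4: "?a ^ 4 = d" using d by (simp add: powr_power)
  have b4: "?b ^ 4 = lam ^ 3"
  proof -
    have "?b ^ 4 = lam powr 3" using lam by (simp add: powr_power)
    also have "\<dots> = lam ^ 3" using lam powr_realpow[of lam 3] by simp
    finally show ?thesis .
  qed
  have "X * ?b \<le> c * ?a" using h b0 by (simp add: field_simps)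
  then have "(X * ?b) ^ 4 \<le> (c * ?a) ^ 4" using X b0 by (intro power_mono) auto
  then show ?thesis by (simp add: power_mult_distrib a4 b4)
qed


lemma large_case:
  fixes d :: nat and lam X :: real
  defines "D \<equiv> real d"
  defines "M \<equiv> max 1 lam"
  defines "u \<equiv> 1 / (4 * M)"
  defines "p \<equiv> max (16 * X * M / D) (6 / D)"
  assumes D: "2000 \<le> D" and lam1: "1 / D \<le> lam" and lam2: "lam \<le> D" and X: "0 < X"
    and H: "X^4 * lam^3 \<le> (1/8192)^4 * D"
  shows "0 \<le> p" "p \<le> 1"
    "2 * ((1 + p^2 * (exp (lam * (exp u - 1)) - 1)) ^ d - 1) \<le> 1/8"
    "exp (2 * X / u) * (1 - p + p * exp (-2)) ^ d \<le> 1/4"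
proof -
  have D0: "0 < D" using D by simp
  have lam0: "0 < lam" using lam1 D0 by (smt (verit) divide_pos_pos)
  have M1: "1 \<le> M" and Ml: "lam \<le> M" unfolding M_def by auto
  have M0: "0 < M" using M1 by simp
  have lamD: "1 \<le> D * lam" using lam1 D0 by (simp add: field_simps)
  have MF1: "M^4 \<le> D^3 * lam^3"
  proof (cases "1 \<le> lam")
    case True
    then have "M = lam" unfolding M_def by simp
    moreover have "lam ^ 4 \<le> D^3 * lam^3"
    proof -
      have "lam \<le> D^3" using lam2 D by (smt (verit) power3_eq_cube mult_le_cancel_right1 mult_nonneg_nonneg)
      then have "lam * lam^3 \<le> D^3 * lam^3" using lam0 by (intro mult_right_mono) auto
      then show ?thesis by (simp add: power_Suc[symmetric] field_simps)
    qed
    ultimately show ?thesis by simp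
  next
    case False
    then have "M = 1" unfolding M_def by simp
    moreover have "1 \<le> (D * lam)^3" using lamD by simp
    ultimately show ?thesis by (simp add: power_mult_distrib)
  qed
  have MF2: "M^2 \<le> D * lam"
  proof (cases "1 \<le> lam")
    case True
    then have "M = lam" unfolding M_def by simp
    moreover have "lam * lam \<le> D * lam" using lam2 lam0 by (intro mult_right_mono) auto
    ultimately show ?thesis by (simp add: power2_eq_square)
  next
    case False
    then have "M = 1" unfolding M_def by simp
    then show ?thesis using lamD by simp
  qed
  have P1: "16 * X * M \<le> D"
  proof -
    have "(16 * X * M)^4 * lam^3 = 65536 * M^4 * (X^4 * lam^3)" by (simp add: power_mult_distrib)
    also have "\<dots> \<le> 65536 * M^4 * ((1/8192)^4 * D)" using H M0 by (intro mult_left_mono) auto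
    also have "\<dots> = (65536 * (1/8192)^4 * D) * M^4" by simp
    also have "\<dots> \<le> (65536 * (1/8192)^4 * D) * (D^3 * lam^3)" using MF1 D0 by (intro mult_left_mono) auto
    also have "\<dots> = (65536 * (1/8192)^4) * (D^4 * lam^3)" by (simp add: power4_eq_xxxx power3_eq_cube mult_ac)
    also have "\<dots> \<le> D^4 * lam^3" using D0 lam0 by (intro mult_left_le_one_le) (simp_all add: power4_eq_xxxx)
    finally have f1: "(16 * X * M)^4 * lam^3 \<le> D^4 * lam^3" .
    have "(16 * X * M)^4 \<le> D^4" by (rule mult_right_le_imp_le[OF f1]) (simp add: lam0)
    moreover have "0 \<le> 16 * X * M" using X M0 by simp
    ultimately show ?thesis using power_mono_iff[of "16 * X * M" D 4] D0 by linarith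
  qed
  have P2: "8192 * X^2 * lam * M \<le> D"
  proof -
    have "(8192 * X^2 * lam * M)^2 * lam = 8192^2 * M^2 * (X^4 * lam^3)" by (simp add: power_mult_distrib power2_eq_square power4_eq_xxxx power3_eq_cube)
    also have "\<dots> \<le> 8192^2 * M^2 * ((1/8192)^4 * D)" using H M0 by (intro mult_left_mono) auto
    also have "\<dots> = (8192^2 * (1/8192)^4 * D) * M^2" by simp
    also have "\<dots> \<le> (8192^2 * (1/8192)^4 * D) * (D * lam)" using MF2 D0 by (intro mult_left_mono) auto
    also have "\<dots> \<le> D^2 * lam" using D0 lam0 by (simp add: power2_eq_square field_simps)
    finally have f2: "(8192 * X^2 * lam * M)^2 * lam \<le> D^2 * lam" .
    have "(8192 * X^2 * lam * M)^2 \<le> D^2" by (rule mult_right_le_imp_le[OF f2]) (simp add: lam0)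
    moreover have "0 \<le> 8192 * X^2 * lam * M" using X M0 lam0 by simp
    ultimately show ?thesis using power_mono_iff[of "8192 * X^2 * lam * M" D 2] D0 by linarith
  qed
  show p0: "0 \<le> p" unfolding p_def using D0 by (simp add: le_max_iff_disj)
  show p1: "p \<le> 1" unfolding p_def using P1 D0 D by (auto simp: field_simps)
  have pD6: "6 \<le> D * p"
  proof -
    have "6 / D \<le> p" unfolding p_def by simp
    then have "D * (6 / D) \<le> D * p" using D0 by (intro mult_left_mono) auto
    then show ?thesis using D0 by simp
  qed
  have pX: "16 * X * M \<le> D * p"
  proof -
    have "16 * X * M / D \<le> p" unfolding p_def by simp
    then have "D * (16 * X * M / D) \<le> D * p" using D0 by (intro mult_left_mono) auto
    then show ?thesis using D0 by simp
  qed
  have u0: "0 < u" and u14: "u \<le> 1/4" unfolding u_def using M1 by (auto simp: field_simps)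
  have eu: "exp u - 1 \<le> 2 * u" using exp_le_lin[of u] u0 u14 by simp
  have eu0: "0 \<le> exp u - 1" using u0 by simp
  have lu: "lam * u \<le> 1/4" unfolding u_def using Ml M0 by (simp add: field_simps)
  define y where "y = lam * (exp u - 1)"
  have y0: "0 \<le> y" unfolding y_def using lam0 eu0 by simp
  have y1: "y \<le> 2 * (lam * u)" unfolding y_def using lam0 eu by (simp add: mult_left_mono)
  have Ey: "exp y - 1 \<le> 4 * (lam * u)" using exp_le_lin[of y] y0 y1 lu by simp
  have Ey0: "0 \<le> exp y - 1" using y0 by simp
  have key: "D * p^2 * (4 * (lam * u)) \<le> 1/32"
  proof -
    have lu': "4 * (lam * u) = lam / M" unfolding u_def using M0 by simp
    have "D * p^2 * (lam / M) \<le> 1/32"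
    proof (cases "16 * X * M / D \<le> 6 / D")
      case True
      then have pe: "p = 6 / D" unfolding p_def by simp
      have "D * p^2 * (lam / M) = 36 * (lam / M) / D" unfolding pe using D0 M0 by (simp add: power2_eq_square field_simps)
      also have "\<dots> \<le> 36 / D" using Ml M0 D0 by (simp add: field_simps)
      also have "\<dots> \<le> 1/32" using D by (simp add: field_simps)
      finally show ?thesis .
    next
      case False
      then have pe: "p = 16 * X * M / D" unfolding p_def by simp
      have "D * p^2 * (lam / M) = 256 * X^2 * lam * M / D" unfolding pe using D0 M0 by (simp add: power2_eq_square field_simps)
      also have "\<dots> \<le> 1/32" using P2 D0 by (simp add: field_simps)
      finally show ?thesis .
    qed
    then show ?thesis using lu' by simp
  qed
  define z where "z = p^2 * (exp y - 1)"
  have z0: "0 \<le> z" unfolding z_def using Ey0 by simp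
  have Dz: "D * z \<le> 1/32"
  proof -
    have "D * z \<le> D * p^2 * (4 * (lam * u))" unfolding z_def using Ey D0 by (simp add: mult_left_mono)
    then show ?thesis using key by simp
  qed
  have "(1 + z) ^ d \<le> exp z ^ d" using z0 by (intro power_mono) auto
  also have "\<dots> = exp (D * z)" unfolding D_def by (simp add: exp_of_nat_mult)
  also have "\<dots> \<le> 1 + 2 * (D * z)" using exp_le_lin[of "D * z"] Dz z0 D0 by simp
  finally have "(1 + z) ^ d \<le> 1 + 2 * (D * z)" .
  then show "2 * ((1 + p^2 * (exp (lam * (exp u - 1)) - 1)) ^ d - 1) \<le> 1/8"
    using Dz unfolding z_def y_def by simp
  have q1: "1 - p + p * exp (-2) \<le> exp (- (4/5 * p))"
  proof -
    have "p * exp (-2) \<le> p * (1/5)" by (rule mult_left_mono[OF exp_neg2 p0])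
    then have "1 - p + p * exp (-2) \<le> 1 + (- (4/5 * p))" by linarith
    also have "\<dots> \<le> exp (- (4/5 * p))" by (rule exp_ge_add_one_self)
    finally show ?thesis .
  qed
  have q0: "0 \<le> 1 - p + p * exp (-2)"
  proof -
    have "0 \<le> p * exp (-2)" using p0 by simp
    then show ?thesis using p1 by linarith
  qed
  have "(1 - p + p * exp (-2)) ^ d \<le> exp (- (4/5 * p)) ^ d" using q0 q1 by (intro power_mono) auto
  also have "\<dots> = exp (- (4/5 * (D * p)))" unfolding D_def by (simp add: exp_of_nat_mult[symmetric] algebra_simps)
  finally have qd: "(1 - p + p * exp (-2)) ^ d \<le> exp (- (4/5 * (D * p)))" .
  have "exp (2 * X / u) * (1 - p + p * exp (-2)) ^ d \<le> exp (2 * X / u) * exp (- (4/5 * (D * p)))"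
    using qd by (intro mult_left_mono) auto
  also have "\<dots> = exp (2 * X / u - 4/5 * (D * p))" by (subst exp_add[symmetric]) simp
  also have "\<dots> \<le> exp (-1.8)"
  proof -
    have "2 * X / u = 8 * X * M" unfolding u_def using M0 by simp
    then have "2 * X / u - 4/5 * (D * p) \<le> -1.8" using pX pD6 by linarith
    then show ?thesis by simp
  qed
  also have "\<dots> \<le> 1/4" by (rule exp_neg18)
  finally show "exp (2 * X / u) * (1 - p + p * exp (-2)) ^ d \<le> 1/4" .
qed


lemma small_case:
  fixes d :: nat and lam X :: real
  defines "D \<equiv> real d"
  assumes D1: "1 \<le> D" and D2: "D < 2000" and lam1: "1 / D \<le> lam" and lam2: "lam \<le> D" and X: "0 < X"
    and H: "X^4 * lam^3 \<le> (1/8192)^4 * D"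
  shows "2 * ((1 + 1^2 * (exp (lam * (exp (2 * X / D) - 1)) - 1)) ^ d - 1) \<le> 1/8"
proof -
  have D0: "0 < D" using D1 by simp
  have lam0: "0 < lam" using lam1 D0 by (smt (verit) divide_pos_pos)
  have il: "1 / lam \<le> D" using lam1 D0 lam0 by (simp add: field_simps)
  have XD: "X \<le> D / 8192"
  proof -
    have "X^4 = (X^4 * lam^3) * (1/lam)^3" using lam0 by (simp add: power_one_over field_simps)
    also have "\<dots> \<le> ((1/8192)^4 * D) * (1/lam)^3"
      by (rule mult_right_mono[OF H]) (use lam0 in simp)
    also have "\<dots> \<le> ((1/8192)^4 * D) * D^3"
      by (intro mult_left_mono power_mono) (use il lam0 D0 in auto)
    also have "\<dots> = (D / 8192)^4" by (simp add: power4_eq_xxxx power3_eq_cube field_simps)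
    finally have "X^4 \<le> (D / 8192)^4" .
    then show ?thesis using power_mono_iff[of X "D/8192" 4] X D0 by linarith
  qed
  define t2 where "t2 = 2 * X / D"
  have t20: "0 \<le> t2" unfolding t2_def using X D0 by simp
  have t21: "t2 \<le> 1/2" unfolding t2_def using XD D0 by (simp add: field_simps)
  have et: "exp t2 - 1 \<le> 2 * t2" using exp_le_lin[OF t20 t21] by simp
  have et0: "0 \<le> exp t2 - 1" using t20 by simp
  have LX: "lam * X \<le> 1/128"
  proof -
    have "(lam * X)^4 = lam * (X^4 * lam^3)" by (simp add: power4_eq_xxxx power3_eq_cube)
    also have "\<dots> \<le> lam * ((1/8192)^4 * D)" using H lam0 by (intro mult_left_mono) auto
    also have "\<dots> \<le> D * ((1/8192)^4 * D)" using lam2 D0 by (intro mult_right_mono) auto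
    also have "\<dots> \<le> 2000 * ((1/8192)^4 * 2000)" using D0 D2 by (intro mult_mono) auto
    also have "\<dots> \<le> (1/128)^4" by (simp add: power4_eq_xxxx)
    finally have "(lam * X)^4 \<le> (1/128)^4" .
    then show ?thesis using power_mono_iff[of "lam * X" "1/128" 4] X lam0 by simp
  qed
  define w where "w = D * (lam * (exp t2 - 1))"
  have w0: "0 \<le> w" unfolding w_def using D0 lam0 et0 by simp
  have w1: "w \<le> 1/32"
  proof -
    have "w \<le> D * (lam * (2 * t2))" unfolding w_def using D0 lam0 et by (intro mult_left_mono) auto
    also have "\<dots> = 4 * (lam * X)" unfolding t2_def using D0 by (simp add: field_simps)
    finally show ?thesis using LX by simp
  qed
  have "(1 + 1^2 * (exp (lam * (exp t2 - 1)) - 1)) ^ d = exp (lam * (exp t2 - 1)) ^ d" by simp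
  also have "\<dots> = exp w" unfolding w_def D_def by (simp add: exp_of_nat_mult[symmetric])
  also have "\<dots> \<le> 1 + 2 * w" using exp_le_lin[of w] w0 w1 by simp
  finally show ?thesis using w1 unfolding t2_def by simp
qed

lemma near_p1_zero:
  fixes d :: nat
  assumes "b \<in> Bs d" and "X < real d * t^2"
  shows "wt d 1 b * (if real (card {i\<in>{..<d}. b i}) * t^2 \<le> X then 1 else 0) = 0"
proof (cases "\<forall>i<d. b i")
  case True
  then have "{i\<in>{..<d}. b i} = {..<d}" by auto
  then show ?thesis using assms by simp
next
  case False
  then obtain i where "i < d" "\<not> b i" by auto
  then have "wt d 1 b = 0" unfolding wt_def by (intro prod_zero) auto
  then show ?thesis by simp
qed

theorem proposition3:
  "\<exists>c::real. c > 0 \<and>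
     (\<forall>(d::nat) (lam::real) (\<epsilon>::real).
        d \<ge> 1 \<longrightarrow> 1 / real d \<le> lam \<longrightarrow> lam \<le> real d \<longrightarrow> \<epsilon> > 0 \<longrightarrow>
        \<epsilon>^2 \<le> c * real d powr (1/4) / lam powr (3/4) \<longrightarrow>
        (\<forall>\<psi> \<in> measurable (obs_full_space d) (count_space UNIV).
           test_risk d lam \<psi> {\<lambda>_. 0} (monotone_diff d \<inter> pos_orthant d) \<epsilon> \<ge> 1/2))"
proof (intro exI[of _ "1/8192"] conjI allI impI ballI)
  show "(0::real) < 1/8192" by simp
  fix d :: nat and lam \<epsilon> :: real and \<psi> :: "(nat \<Rightarrow> nat \<times> (nat \<Rightarrow> real)) \<Rightarrow> bool"
  assume d: "1 \<le> d" and lam1: "1 / real d \<le> lam" and lam2: "lam \<le> real d" and eps: "0 < \<epsilon>"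
    and h: "\<epsilon>^2 \<le> 1/8192 * real d powr (1/4) / lam powr (3/4)"
    and psi: "\<psi> \<in> measurable (obs_full_space d) (count_space UNIV)"
  define X where "X = \<epsilon>^2"
  have X0: "0 < X" unfolding X_def using eps by simp
  have D0: "0 < real d" using d by simp
  have lam0: "0 < lam" using lam1 D0 by (smt (verit) divide_pos_pos)
  have H: "X^4 * lam^3 \<le> (1/8192)^4 * real d"
    using fourth_power_bound[OF D0 lam0 _ _ h[folded X_def]] X0 by simp
  show "1/2 \<le> test_risk d lam \<psi> {\<lambda>_. 0} (monotone_diff d \<inter> pos_orthant d) \<epsilon>"
  proof (cases "2000 \<le> real d")
    case True
    define M where "M = max 1 lam"
    define u where "u = 1 / (4 * M)"
    define p where "p = max (16 * X * M / real d) (6 / real d)"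
    note LC = large_case[OF True lam1 lam2 X0 H, folded M_def, folded u_def, folded p_def]
    have u0: "0 < u" unfolding u_def M_def by simp
    define t where "t = sqrt u"
    have t0: "0 < t" unfolding t_def using u0 by simp
    have tt: "t^2 = u" unfolding t_def using u0 by simp
    have R: "1 - 1/8 - 2 * ((1 + p^2 * (exp (lam * (exp (t^2) - 1)) - 1)) ^ d - 1)
      - (\<Sum>b\<in>Bs d. wt d p b * (if real (card {i\<in>{..<d}. b i}) * t^2 \<le> \<epsilon>^2 then 1 else 0))
      \<le> test_risk d lam \<psi> {\<lambda>_. 0} (monotone_diff d \<inter> pos_orthant d) \<epsilon>"
      by (rule risk_lower[OF d lam0 eps LC(1) LC(2) _ psi]) (use t0 in simp)
    have N: "(\<Sum>b\<in>Bs d. wt d p b * (if real (card {i\<in>{..<d}. b i}) * t^2 \<le> \<epsilon>^2 then 1 else 0)) \<le> 1/4"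
      using near_sum_bound[OF t0 LC(1) LC(2), of d "\<epsilon>^2"] LC(4) tt unfolding X_def by simp
    show ?thesis using R N LC(3) tt by simp
  next
    case False
    define t where "t = sqrt (2 * X / real d)"
    have nn: "0 \<le> 2 * X / real d" using X0 D0 by (intro divide_nonneg_pos) auto
    have t0: "0 \<le> t" unfolding t_def using nn by simp
    have tt: "t^2 = 2 * X / real d" unfolding t_def using nn by simp
    have R: "1 - 1/8 - 2 * ((1 + 1^2 * (exp (lam * (exp (t^2) - 1)) - 1)) ^ d - 1)
      - (\<Sum>b\<in>Bs d. wt d 1 b * (if real (card {i\<in>{..<d}. b i}) * t^2 \<le> \<epsilon>^2 then 1 else 0))
      \<le> test_risk d lam \<psi> {\<lambda>_. 0} (monotone_diff d \<inter> pos_orthant d) \<epsilon>"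
      by (rule risk_lower[OF d lam0 eps _ _ t0 psi]) simp_all
    have N: "(\<Sum>b\<in>Bs d. wt d 1 b * (if real (card {i\<in>{..<d}. b i}) * t^2 \<le> \<epsilon>^2 then 1 else 0)) = 0"
    proof (intro sum.neutral ballI)
      fix b assume "b \<in> Bs d"
      moreover have "\<epsilon>^2 < real d * t^2" using tt X0 D0 unfolding X_def by (simp add: field_simps)
      ultimately show "wt d 1 b * (if real (card {i\<in>{..<d}. b i}) * t^2 \<le> \<epsilon>^2 then 1 else 0) = 0"
        by (rule near_p1_zero)
    qed
    have S: "2 * ((1 + 1^2 * (exp (lam * (exp (2 * X / real d) - 1)) - 1)) ^ d - 1) \<le> 1/8"
      using small_case[of d lam X] d False lam1 lam2 X0 H by simp
    show ?thesis using R N S tt by simp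
  qed
qed

end
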